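(* Let $\delta=(\delta_1,\dots,\delta_n)\in\{\mathsf{A},\mathsf{D}\}^n$ and let $I=(I_1,\dots,I_n)$ be an integer vector with $I_i\in[0,\tfrac{i(i-1)}{2}]$ for each $i$. If $\mathbf{i}\in R(w_0^{(n+1)})$ satisfies $\mathbf{i}\sim \mathbf{i}_\delta(I)$, then $\mathrm{ind}_\delta(\mathbf{i})=I$.
   Context: Let $R(w_0^{(n+1)})$ denote the set of reduced words $\mathbf{i}=(i_1,\dots,i_{\bar n})\in[n]^{\bar n}$ of the longest element $w_0^{(n+1)}$ of the symmetric group $\mathfrak{S}_{n+1}$ (generated by simple transpositions $s_1,\dots,s_n$), where $\bar n=n(n+1)/2$. A 2-move exchanges two consecutive letters $i,j$ with $|i-j|>1$; write $\mathbf{i}\sim\mathbf{i}'$ if $\mathbf{i}$ and $\mathbf{i}'$ are related by a sequence of 2-moves. Put $\mathsf{D}_n=(n,n-1,\dots,1)$ and $\mathsf{A}_n=(1,2,\dots,n)$. Every $\mathbf{i}\in R(w_0^{(n+1)})$ satisfies $\mathbf{i}\sim\mathbf{i}^-_{\mathsf{D}}\,\mathsf{D}_n\,\mathbf{i}^+_{\mathsf{D}}\sim\mathbf{i}^-_{\mathsf{A}}\,\mathsf{A}_n\,\mathbf{i}^+_{\mathsf{A}}$ for some words $\mathbf{i}^\pm_{\mathsf{D}},\mathbf{i}^\pm_{\mathsf{A}}$ (chosen minimal, i.e. using as few 2-moves as possible); the $\mathsf{D}$-index and $\mathsf{A}$-index are $\mathrm{ind}_{\mathsf{D}}(\mathbf{i})=|\mathbf{i}^+_{\mathsf{D}}|$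 and $\mathrm{ind}_{\mathsf{A}}(\mathbf{i})=|\mathbf{i}^+_{\mathsf{A}}|$. For a word $\mathbf{j}=(j_1,\dots,j_k)$ write $\mathbf{j}\pm1=(j_1\pm1,\dots,j_k\pm1)$. The contractions are $C_{\mathsf{D}}(\mathbf{i})=\mathbf{i}^-_{\mathsf{D}}(\mathbf{i}^+_{\mathsf{D}}-1)\in R(w_0^{(n)})$ and $C_{\mathsf{A}}(\mathbf{i})=(\mathbf{i}^-_{\mathsf{A}}-1)\mathbf{i}^+_{\mathsf{A}}\in R(w_0^{(n)})$. For $s\in[0,\bar n]$, writing $\mathbf{i}=\mathbf{i}^-(s)\,\mathbf{i}^+(s)$ with $|\mathbf{i}^+(s)|=s$, the extensions are $E_{\mathsf{D}}(s)(\mathbf{i})=\mathbf{i}^-(s)\,\mathsf{D}_{n+1}\,(\mathbf{i}^+(s)+1)$ and $E_{\mathsf{A}}(s)(\mathbf{i})=(\mathbf{i}^-(s)+1)\,\mathsf{A}_{n+1}\,\mathbf{i}^+(s)$, both in $R(w_0^{(n+2)})$. For $\delta=(\delta_1,\dots,\delta_n)\in\{\mathsf{A},\mathsf{D}\}^n$ and $I$ as in the claim, $\mathbf{i}_\delta(I)=(E_{\delta_n}(I_n)\circ\cdots\circ E_{\delta_1}(I_1))(\emptyset)\in R(w_0^{(n+1)})$. The $\delta$-index of $\mathbf{i}$ is $\mathrm{ind}_\delta(\mathbf{i})=(I_1,\dots,I_n)$ with $I_n=\mathrm{ind}_{\delta_n}(\mathbf{i})$, $I_{n-1}=\mathrm{ind}_{\delta_{n-1}}(C_{\delta_n}(\mathbf{i}))$,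 …, $I_1=\mathrm{ind}_{\delta_1}(C_{\delta_2}\circ\cdots\circ C_{\delta_n}(\mathbf{i}))$. *)

theory Defs
  imports Main
begin

definition sref :: "nat \<Rightarrow> nat \<Rightarrow> nat" where
  "sref i j = (if j = i then Suc i else if j = Suc i then i else j)"

definition word_prod :: "nat list \<Rightarrow> (nat \<Rightarrow> nat)" where
  "word_prod w = foldr (\<lambda>i f. sref i \<circ> f) w id"

definition w0 :: "nat \<Rightarrow> nat \<Rightarrow> nat" where
  "w0 n j = (if 1 \<le> j \<and> j \<le> Suc n then n + 2 - j else j)"

text \<open>R(w_0^{(n+1)}): words in [n]^{n(n+1)/2} whose product is w_0.
  (A word of length l(w_0) representing w_0 is automatically reduced.)\<close>
definition redw0 :: "nat \<Rightarrow> nat list set" where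
  "redw0 n = {w. length w = n * (n + 1) div 2 \<and> set w \<subseteq> {1..n} \<and> word_prod w = w0 n}"

definition move2 :: "nat list \<Rightarrow> nat list \<Rightarrow> bool" where
  "move2 u v \<longleftrightarrow> (\<exists>a b x y. u = a @ [x, y] @ b \<and> v = a @ [y, x] @ b \<and> (x + 1 < y \<or> y + 1 < x))"

abbreviation commeq :: "nat list \<Rightarrow> nat list \<Rightarrow> bool" (infix "\<sim>\<^sub>2" 50) where
  "u \<sim>\<^sub>2 v \<equiv> move2\<^sup>*\<^sup>* u v"

definition move_dist :: "nat list \<Rightarrow> nat list \<Rightarrow> nat" where
  "move_dist u v = (LEAST k. (move2 ^^ k) u v)"

definition Dw :: "nat \<Rightarrow> nat list" where "Dw n = rev [1..<Suc n]"
definition Aw :: "nat \<Rightarrow> nat list" where "Aw n = [1..<Suc n]"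

datatype dir = A | D

definition dword :: "dir \<Rightarrow> nat \<Rightarrow> nat list" where
  "dword d n = (case d of A \<Rightarrow> Aw n | D \<Rightarrow> Dw n)"

definition min_decomps :: "nat list \<Rightarrow> nat list \<Rightarrow> (nat list \<times> nat list) set" where
  "min_decomps P w = {(u, v). w \<sim>\<^sub>2 u @ P @ v \<and>
      (\<forall>u' v'. w \<sim>\<^sub>2 u' @ P @ v' \<longrightarrow> move_dist w (u @ P @ v) \<le> move_dist w (u' @ P @ v'))}"

definition decomp :: "dir \<Rightarrow> nat \<Rightarrow> nat list \<Rightarrow> nat list \<times> nat list" where
  "decomp d n w = (SOME p. p \<in> min_decomps (dword d n) w)"

definition ind :: "dir \<Rightarrow> nat \<Rightarrow> nat list \<Rightarrow> nat" where
  "ind d n w = length (snd (decomp d n w))"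

definition contr :: "dir \<Rightarrow> nat \<Rightarrow> nat list \<Rightarrow> nat list" where
  "contr d n w = (case decomp d n w of (u, v) \<Rightarrow>
     (case d of D \<Rightarrow> u @ map (\<lambda>x. x - 1) v | A \<Rightarrow> map (\<lambda>x. x - 1) u @ v))"

definition ext :: "dir \<Rightarrow> nat \<Rightarrow> nat \<Rightarrow> nat list \<Rightarrow> nat list" where
  "ext d n s w = (let u = take (length w - s) w; v = drop (length w - s) w in
     (case d of D \<Rightarrow> u @ Dw n @ map Suc v | A \<Rightarrow> map Suc u @ Aw n @ v))"

text \<open>i_delta(I) truncated to the first k letters of delta and I (deltas, I as lists,
  entry k-1 corresponding to delta_k, I_k).\<close>
fun iword :: "nat \<Rightarrow> dir list \<Rightarrow> nat list \<Rightarrow> nat list" where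
  "iword 0 ds Is = []"
| "iword (Suc k) ds Is = ext (ds ! k) (Suc k) (Is ! k) (iword k ds Is)"

fun ind_delta :: "nat \<Rightarrow> dir list \<Rightarrow> nat list \<Rightarrow> nat list" where
  "ind_delta 0 ds w = []"
| "ind_delta (Suc k) ds w =
     ind_delta k ds (contr (ds ! k) (Suc k) w) @ [ind (ds ! k) (Suc k) w]"

end

theory Submission
  imports Defs
begin

lemma move2_sym: "move2 u v \<Longrightarrow> move2 v u"
  unfolding move2_def by blast

lemma commeq_sym: "u \<sim>\<^sub>2 v \<Longrightarrow> v \<sim>\<^sub>2 u"
proof (induction rule: rtranclp_induct)
  case base then show ?case by simp
next
  case (step y z) then show ?case
    by (meson converse_rtranclp_into_rtranclp move2_sym)
qed

lemma move2_ctx: "move2 u v \<Longrightarrow> move2 (p @ u @ q) (p @ v @ q)"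
  unfolding move2_def
  by (metis append.assoc)

lemma commeq_ctx: "u \<sim>\<^sub>2 v \<Longrightarrow> (p @ u @ q) \<sim>\<^sub>2 (p @ v @ q)"
proof (induction rule: rtranclp_induct)
  case base then show ?case by simp
next
  case (step y z) then show ?case
    by (meson move2_ctx rtranclp.rtrancl_into_rtrancl)
qed

lemma commeq_app: "u \<sim>\<^sub>2 u' \<Longrightarrow> v \<sim>\<^sub>2 v' \<Longrightarrow> (u @ v) \<sim>\<^sub>2 (u' @ v')"
proof -
  assume a: "u \<sim>\<^sub>2 u'" "v \<sim>\<^sub>2 v'"
  have "([] @ u @ v) \<sim>\<^sub>2 ([] @ u' @ v)" using commeq_ctx[OF a(1)] .
  moreover have "(u' @ v @ []) \<sim>\<^sub>2 (u' @ v' @ [])" using commeq_ctx[OF a(2)] .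
  ultimately show ?thesis by simp
qed

lemma commeq_Cons: "u \<sim>\<^sub>2 v \<Longrightarrow> (a # u) \<sim>\<^sub>2 (a # v)"
  using commeq_app[of "[a]" "[a]" u v] by simp

definition prj :: "nat \<Rightarrow> nat list \<Rightarrow> nat list" where
  "prj j w = filter (\<lambda>x. x = j \<or> x = Suc j) w"

definition cnt :: "nat \<Rightarrow> nat list \<Rightarrow> nat" where
  "cnt j w = length (filter (\<lambda>x. x = j) w)"

lemma move2_prj: "move2 u v \<Longrightarrow> prj j u = prj j v"
  unfolding move2_def prj_def by auto

lemma commeq_prj: "u \<sim>\<^sub>2 v \<Longrightarrow> prj j u = prj j v"
  by (induction rule: rtranclp_induct) (auto dest: move2_prj)

lemma move2_set: "move2 u v \<Longrightarrow> set u = set v"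
  unfolding move2_def by auto

lemma commeq_set: "u \<sim>\<^sub>2 v \<Longrightarrow> set u = set v"
  by (induction rule: rtranclp_induct) (auto dest: move2_set)

lemma move2_length: "move2 u v \<Longrightarrow> length u = length v"
  unfolding move2_def by auto

lemma commeq_length: "u \<sim>\<^sub>2 v \<Longrightarrow> length u = length v"
  by (induction rule: rtranclp_induct) (auto dest: move2_length)

lemma commute_past:
  "\<forall>b\<in>set v1. a + 1 < b \<or> b + 1 < a \<Longrightarrow> (a # v1 @ v2) \<sim>\<^sub>2 (v1 @ a # v2)"
proof (induction v1)
  case Nil then show ?case by simp
next
  case (Cons c v1)
  have "move2 ([] @ [a, c] @ (v1 @ v2)) ([] @ [c, a] @ (v1 @ v2))"
    unfolding move2_def using Cons.prems by (metis list.set_intros(1))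
  then have 1: "(a # c # v1 @ v2) \<sim>\<^sub>2 (c # a # v1 @ v2)" by simp
  have "(c # a # v1 @ v2) \<sim>\<^sub>2 (c # v1 @ a # v2)"
    using Cons by (intro commeq_Cons) auto
  with 1 show ?case by simp
qed

lemma prj_commeq: "\<forall>j. prj j u = prj j v \<Longrightarrow> u \<sim>\<^sub>2 v"
proof (induction u arbitrary: v)
  case Nil
  have "v = []"
  proof (rule ccontr)
    assume "v \<noteq> []"
    then obtain x where "x \<in> set v" by (cases v) auto
    then have "prj x v \<noteq> []" unfolding prj_def by (auto simp: filter_empty_conv)
    with Nil show False unfolding prj_def by simp
  qed
  then show ?case by simp
next
  case (Cons a u)
  have "prj a v = a # prj a u" using Cons.prems[rule_format, of a] unfolding prj_def by simp
  then have "a \<in> set (prj a v)" by simp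
  then have "a \<in> set v" unfolding prj_def by simp
  then obtain v1 v2 where v: "v = v1 @ a # v2" and na: "a \<notin> set v1"
    by (meson split_list_first)
  have comm: "\<forall>b\<in>set v1. a + 1 < b \<or> b + 1 < a"
  proof (rule ccontr)
    assume "\<not> ?thesis"
    then obtain b where b: "b \<in> set v1" "\<not> (a + 1 < b \<or> b + 1 < a)" by blast
    have "b \<noteq> a" using b na by auto
    then consider "b = Suc a" | "a = Suc b" using b by linarith
    then show False
    proof cases
      case 1
      have "prj a v1 \<noteq> []" using b 1 unfolding prj_def by (auto simp: filter_empty_conv)
      moreover have "prj a v = prj a v1 @ a # prj a v2" using v unfolding prj_def by simp
      ultimately have "hd (prj a v) = hd (prj a v1)" by simp
      moreover have "hd (prj a v1) \<in> set v1" using \<open>prj a v1 \<noteq> []\<close> unfolding prj_def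
        using hd_in_set[of "filter _ _"] by fastforce
      moreover have "hd (prj a v) = a" using \<open>prj a v = a # prj a u\<close> by simp
      ultimately show False using na by simp
    next
      case 2
      have "prj b v1 \<noteq> []" using b 2 unfolding prj_def by (auto simp: filter_empty_conv)
      moreover have "prj b v = prj b v1 @ a # prj b v2" using v 2 unfolding prj_def by simp
      ultimately have "hd (prj b v) = hd (prj b v1)" by simp
      moreover have "hd (prj b v1) \<in> set v1" using \<open>prj b v1 \<noteq> []\<close> unfolding prj_def
        using hd_in_set[of "filter _ _"] by fastforce
      moreover have "prj b (a # u) = a # prj b u" using 2 unfolding prj_def by simp
      then have "hd (prj b v) = a" using Cons.prems[rule_format, of b] by simp
      ultimately show False using na by simp
    qed
  qed
  have "\<forall>j. prj j u = prj j (v1 @ v2)"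
  proof
    fix j
    show "prj j u = prj j (v1 @ v2)"
    proof (cases "a = j \<or> a = Suc j")
      case True
      have "prj j v1 = []"
        using comm True na unfolding prj_def by (auto simp: filter_empty_conv)
      then show ?thesis using Cons.prems[rule_format, of j] v True unfolding prj_def by auto
    next
      case False
      then show ?thesis using Cons.prems[rule_format, of j] v unfolding prj_def by auto
    qed
  qed
  then have "u \<sim>\<^sub>2 (v1 @ v2)" using Cons.IH by blast
  then have "(a # u) \<sim>\<^sub>2 (a # v1 @ v2)" by (rule commeq_Cons)
  also have "(a # v1 @ v2) \<sim>\<^sub>2 v" using commute_past[OF comm] v by simp
  finally show ?case .
qed

lemma commeq_map_pred:
  "u \<sim>\<^sub>2 v \<Longrightarrow> \<forall>x\<in>set u. 0 < x \<Longrightarrow> map (\<lambda>x. x - 1) u \<sim>\<^sub>2 map (\<lambda>x. x - 1) v"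
proof (induction rule: rtranclp_induct)
  case base then show ?case by simp
next
  case (step y z)
  have sy: "set y = set u" using step.hyps(1) commeq_set by metis
  obtain a b x y' where y: "y = a @ [x, y'] @ b" and z: "z = a @ [y', x] @ b"
    and c: "x + 1 < y' \<or> y' + 1 < x"
    using step.hyps(2) unfolding move2_def by blast
  have "x > 0" "y' > 0" using step.prems sy y by auto
  then have "move2 (map (\<lambda>x. x - 1) y) (map (\<lambda>x. x - 1) z)"
    unfolding move2_def y z using c
    by (rule_tac x="map (\<lambda>x. x - 1) a" in exI, rule_tac x="map (\<lambda>x. x - 1) b" in exI,
        rule_tac x="x - 1" in exI, rule_tac x="y' - 1" in exI) auto
  with step show ?case by (meson rtranclp.rtrancl_into_rtrancl)
qed

lemma split_by_counts:
  assumes "(U @ P @ V) \<sim>\<^sub>2 (U' @ P @ V')" and "\<forall>j. cnt j U = cnt j U'"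
  shows "U \<sim>\<^sub>2 U'" "V \<sim>\<^sub>2 V'"
proof -
  have len: "length (prj j w) = cnt j w + cnt (Suc j) w" for j w
    unfolding prj_def cnt_def by (induction w) auto
  have e: "prj j U @ prj j P @ prj j V = prj j U' @ prj j P @ prj j V'" for j
    using commeq_prj[OF assms(1), of j] unfolding prj_def by simp
  have l: "length (prj j U) = length (prj j U')" for j using len assms(2) by simp
  have "prj j U = prj j U' \<and> prj j V = prj j V'" for j
    using e[of j] l[of j] by (simp add: append_eq_append_conv)
  then show "U \<sim>\<^sub>2 U'" "V \<sim>\<^sub>2 V'" by (auto intro: prj_commeq)
qed


fun labs :: "(nat \<Rightarrow> nat) \<Rightarrow> nat list \<Rightarrow> (nat \<times> nat set) list" where
  "labs f [] = []"
| "labs f (j # w) = (j, {f j, f (Suc j)}) # labs (f \<circ> sref j) w"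

fun st :: "(nat \<Rightarrow> nat) \<Rightarrow> nat list \<Rightarrow> (nat \<Rightarrow> nat)" where
  "st f [] = f"
| "st f (j # w) = st (f \<circ> sref j) w"

lemma labs_append: "labs f (a @ b) = labs f a @ labs (st f a) b"
  by (induction a arbitrary: f) auto

lemma st_append: "st f (a @ b) = st (st f a) b"
  by (induction a arbitrary: f) auto

lemma map_fst_labs: "map fst (labs f w) = w"
  by (induction w arbitrary: f) auto

lemma length_filter_labs: "length (filter (\<lambda>p. fst p = j) (labs f w)) = cnt j w"
  unfolding cnt_def by (induction w arbitrary: f) auto

lemma sref_comm: "x + 1 < y \<or> y + 1 < x \<Longrightarrow> sref x \<circ> sref y = sref y \<circ> sref x"
  unfolding sref_def by (rule ext) auto

lemma move2_labs:
  assumes "move2 u v"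
  shows "\<exists>A B p q. labs f u = A @ [p, q] @ B \<and> labs f v = A @ [q, p] @ B \<and> fst p \<noteq> fst q"
proof -
  obtain a b x y where u: "u = a @ [x, y] @ b" and v: "v = a @ [y, x] @ b"
    and c: "x + 1 < y \<or> y + 1 < x"
    using assms unfolding move2_def by blast
  define g where "g = st f a"
  have s1: "sref x y = y" "sref x (Suc y) = Suc y" "sref y x = x" "sref y (Suc x) = Suc x"
    using c unfolding sref_def by auto
  have "labs f u = labs f a @ [(x, {g x, g (Suc x)}), (y, {g y, g (Suc y)})] @ labs (g \<circ> sref x \<circ> sref y) b"
    unfolding u labs_append g_def using s1 by simp
  moreover have "labs f v = labs f a @ [(y, {g y, g (Suc y)}), (x, {g x, g (Suc x)})] @ labs (g \<circ> sref x \<circ> sref y) b"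
    unfolding v labs_append g_def using s1 sref_comm[OF c] by (simp add: comp_assoc)
  moreover have "x \<noteq> y" using c by auto
  ultimately show ?thesis by fastforce
qed

definition LL :: "nat \<Rightarrow> nat list \<Rightarrow> nat set list" where
  "LL j w = map snd (filter (\<lambda>p. fst p = j) (labs id w))"

definition LS :: "nat list \<Rightarrow> nat set list" where
  "LS w = map snd (labs id w)"

lemma commeq_LL: "u \<sim>\<^sub>2 v \<Longrightarrow> LL j u = LL j v"
proof (induction rule: rtranclp_induct)
  case base then show ?case by simp
next
  case (step y z)
  obtain A B p q where "labs id y = A @ [p, q] @ B" "labs id z = A @ [q, p] @ B" "fst p \<noteq> fst q"
    using move2_labs[OF step.hyps(2)] by blast
  then have "LL j y = LL j z" unfolding LL_def by auto
  with step show ?case by simp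
qed

lemma commeq_LS_distinct: "u \<sim>\<^sub>2 v \<Longrightarrow> distinct (LS u) = distinct (LS v)"
proof (induction rule: rtranclp_induct)
  case base then show ?case by simp
next
  case (step y z)
  obtain A B p q where "labs id y = A @ [p, q] @ B" "labs id z = A @ [q, p] @ B"
    using move2_labs[OF step.hyps(2)] by blast
  then have "distinct (LS y) = distinct (LS z)" unfolding LS_def by auto
  with step show ?case by simp
qed

lemma sref_perm: "j \<in> {lo..hi} \<Longrightarrow> sref j ` {lo..Suc hi} = {lo..Suc hi}"
  unfolding sref_def by (auto simp: image_iff)

lemma st_outside: "set w \<subseteq> {lo..hi} \<Longrightarrow> k \<notin> {lo..Suc hi} \<Longrightarrow> st f w k = f k"
  by (induction w arbitrary: f) (auto simp: sref_def)

lemma st_image: "set w \<subseteq> {lo..hi} \<Longrightarrow> st f w ` {lo..Suc hi} = f ` {lo..Suc hi}"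
proof (induction w arbitrary: f)
  case Nil then show ?case by simp
next
  case (Cons j w)
  then have "st (f \<circ> sref j) w ` {lo..Suc hi} = (f \<circ> sref j) ` {lo..Suc hi}" by simp
  also have "\<dots> = f ` (sref j ` {lo..Suc hi})" by (simp add: image_comp)
  also have "\<dots> = f ` {lo..Suc hi}" using sref_perm[of j lo hi] Cons.prems by simp
  finally show ?case by simp
qed

lemma inj_sref: "inj (sref j)"
  unfolding sref_def inj_def by auto

lemma st_inj: "inj f \<Longrightarrow> inj (st f w)"
  by (induction w arbitrary: f) (auto intro: inj_compose inj_sref)


lemma Dw_Suc: "Dw (Suc n) = Suc n # Dw n"
  unfolding Dw_def by simp

lemma Aw_Suc: "Aw (Suc n) = Aw n @ [Suc n]"
  unfolding Aw_def by simp

lemma set_Dw: "set (Dw n) = {1..n}" unfolding Dw_def by auto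
lemma set_Aw: "set (Aw n) = {1..n}" unfolding Aw_def by auto
lemma length_Dw: "length (Dw n) = n" unfolding Dw_def by simp
lemma length_Aw: "length (Aw n) = n" unfolding Aw_def by simp
lemma distinct_Dw: "distinct (Dw n)" unfolding Dw_def by simp
lemma distinct_Aw: "distinct (Aw n)" unfolding Aw_def by simp

lemma labs_Dw: "labs f (Dw n) = map (\<lambda>j. (j, {f j, f (Suc n)})) (Dw n)"
proof (induction n arbitrary: f)
  case 0 then show ?case by (simp add: Dw_def)
next
  case (Suc n)
  have "labs (f \<circ> sref (Suc n)) (Dw n) = map (\<lambda>j. (j, {f j, f (Suc (Suc n))})) (Dw n)"
    unfolding Suc.IH by (rule map_cong) (auto simp: set_Dw sref_def)
  then show ?case by (simp add: Dw_Suc sref_def)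
qed

lemma st_Dw: "st f (Dw n) = (\<lambda>k. if k = 1 then f (Suc n) else if 2 \<le> k \<and> k \<le> Suc n then f (k - 1) else f k)"
proof (induction n arbitrary: f)
  case 0 then show ?case by (auto simp: Dw_def)
next
  case (Suc n)
  show ?case unfolding Dw_Suc st.simps Suc.IH by (rule ext) (auto simp: sref_def)
qed

lemma st_Aw: "st f (Aw n) = (\<lambda>k. if k = Suc n then f 1 else if 1 \<le> k \<and> k \<le> n then f (Suc k) else f k)"
proof (induction n)
  case 0 then show ?case by (auto simp: Aw_def)
next
  case (Suc n)
  then show ?case unfolding Aw_Suc st_append by (auto simp: sref_def)
qed

lemma labs_Aw: "labs f (Aw n) = map (\<lambda>j. (j, {f 1, f (Suc j)})) (Aw n)"
proof (induction n)
  case 0 then show ?case by (simp add: Aw_def)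
next
  case (Suc n)
  then show ?case unfolding Aw_Suc labs_append by (simp add: st_Aw)
qed

lemma labs_shift:
  assumes "set w \<subseteq> {1..m}" and "\<forall>k. 1 \<le> k \<and> k \<le> Suc m \<longrightarrow> g (k + a) = f k + c"
  shows "labs g (map (\<lambda>j. j + a) w) = map (\<lambda>(j, l). (j + a, (\<lambda>x. x + c) ` l)) (labs f w)
    \<and> (\<forall>k. 1 \<le> k \<and> k \<le> Suc m \<longrightarrow> st g (map (\<lambda>j. j + a) w) (k + a) = st f w k + c)"
  using assms
proof (induction w arbitrary: f g)
  case Nil then show ?case by simp
next
  case (Cons j w)
  have j: "1 \<le> j" "j \<le> m" using Cons.prems by auto
  have r: "\<forall>k. 1 \<le> k \<and> k \<le> Suc m \<longrightarrow> (g \<circ> sref (j + a)) (k + a) = (f \<circ> sref j) k + c"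
  proof (intro allI impI)
    fix k assume k: "1 \<le> k \<and> k \<le> Suc m"
    have "sref (j + a) (k + a) = sref j k + a" unfolding sref_def by auto
    moreover have "1 \<le> sref j k \<and> sref j k \<le> Suc m" using j k unfolding sref_def by auto
    ultimately show "(g \<circ> sref (j + a)) (k + a) = (f \<circ> sref j) k + c" using Cons.prems(2) by simp
  qed
  have IH: "labs (g \<circ> sref (j + a)) (map (\<lambda>j. j + a) w) = map (\<lambda>(j, l). (j + a, (\<lambda>x. x + c) ` l)) (labs (f \<circ> sref j) w)
    \<and> (\<forall>k. 1 \<le> k \<and> k \<le> Suc m \<longrightarrow> st (g \<circ> sref (j + a)) (map (\<lambda>j. j + a) w) (k + a) = st (f \<circ> sref j) w k + c)"
    using Cons.IH[OF _ r] Cons.prems(1) by (simp add: comp_def)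
  have "g (j + a) = f j + c" "g (Suc j + a) = f (Suc j) + c" using j Cons.prems(2) by auto
  then show ?case using IH by simp
qed


definition Inv :: "nat \<Rightarrow> nat list \<Rightarrow> bool" where
  "Inv m x \<longleftrightarrow> set x \<subseteq> {1..m} \<and> length x = m * (m + 1) div 2 \<and> distinct (LS x)
     \<and> (\<forall>l\<in>set (LS x). l \<subseteq> {1..Suc m})"

lemma ext_D_eq: "s \<le> length x \<Longrightarrow> ext D n s x = take (length x - s) x @ Dw n @ map Suc (drop (length x - s) x)"
  unfolding ext_def by simp

lemma ext_A_eq: "s \<le> length x \<Longrightarrow> ext A n s x = map Suc (take (length x - s) x) @ Aw n @ drop (length x - s) x"
  unfolding ext_def by simp

lemma struct_D:
  assumes "set (u @ v) \<subseteq> {1..m}" "f = st id u"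
  shows "labs id (u @ Dw (Suc m) @ map Suc v) =
     labs id u @ map (\<lambda>j. (j, {f j, Suc (Suc m)})) (Dw (Suc m)) @ map (\<lambda>(j, l). (Suc j, l)) (labs f v)"
    and "f ` {1..Suc m} = {1..Suc m}" and "inj f"
proof -
  have su: "set u \<subseteq> {1..m}" "set v \<subseteq> {1..m}" using assms by auto
  have fo: "f (Suc (Suc m)) = Suc (Suc m)" using st_outside[OF su(1)] assms(2) by simp
  define g where "g = st f (Dw (Suc m))"
  have "\<forall>k. 1 \<le> k \<and> k \<le> Suc m \<longrightarrow> g (k + 1) = f k + 0" unfolding g_def st_Dw by auto
  from labs_shift[OF su(2) this] have
    "labs g (map (\<lambda>j. j + 1) v) = map (\<lambda>(j, l). (j + 1, (\<lambda>x. x + 0) ` l)) (labs f v)" by blast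
  then have "labs g (map Suc v) = map (\<lambda>(j, l). (Suc j, l)) (labs f v)" by simp
  then show "labs id (u @ Dw (Suc m) @ map Suc v) =
     labs id u @ map (\<lambda>j. (j, {f j, Suc (Suc m)})) (Dw (Suc m)) @ map (\<lambda>(j, l). (Suc j, l)) (labs f v)"
    unfolding labs_append st_append labs_Dw g_def assms(2)[symmetric] using fo by simp
  show "f ` {1..Suc m} = {1..Suc m}" using st_image[OF su(1), of id] assms(2) by simp
  show "inj f" using st_inj[of id] assms(2) by simp
qed

lemma struct_A:
  assumes "set (u @ v) \<subseteq> {1..m}" "f = st id u"
  shows "labs id (map Suc u @ Aw (Suc m) @ v) =
     map (\<lambda>(j, l). (Suc j, Suc ` l)) (labs id u) @ map (\<lambda>j. (j, {1, Suc (f j)})) (Aw (Suc m))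
       @ map (\<lambda>(j, l). (j, Suc ` l)) (labs f v)"
    and "f ` {1..Suc m} = {1..Suc m}" and "inj f"
proof -
  have su: "set u \<subseteq> {1..m}" "set v \<subseteq> {1..m}" using assms by auto
  have "\<forall>k. 1 \<le> k \<and> k \<le> Suc m \<longrightarrow> id (k + 1) = id k + 1" by simp
  from labs_shift[OF su(1) this] have
    L1: "labs id (map (\<lambda>j. j + 1) u) = map (\<lambda>(j, l). (j + 1, (\<lambda>x. x + 1) ` l)) (labs id u)"
    and S1: "\<forall>k. 1 \<le> k \<and> k \<le> Suc m \<longrightarrow> st id (map (\<lambda>j. j + 1) u) (k + 1) = st id u k + 1"
    by blast+
  define g where "g = st id (map Suc u)"
  have g1: "g 1 = 1"
  proof -
    have "set (map Suc u) \<subseteq> {2..Suc m}" using su(1) by auto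
    from st_outside[OF this, of 1 id] show ?thesis unfolding g_def by simp
  qed
  have gS: "g (Suc k) = Suc (f k)" if "1 \<le> k" "k \<le> Suc m" for k
    using S1 that unfolding g_def assms(2) by simp
  define h where "h = st g (Aw (Suc m))"
  have "\<forall>k. 1 \<le> k \<and> k \<le> Suc m \<longrightarrow> h (k + 0) = f k + 1" unfolding h_def st_Aw using gS by auto
  from labs_shift[OF su(2) this] have
    "labs h (map (\<lambda>j. j + 0) v) = map (\<lambda>(j, l). (j + 0, (\<lambda>x. x + 1) ` l)) (labs f v)" by blast
  then have L3: "labs h v = map (\<lambda>(j, l). (j, Suc ` l)) (labs f v)" by simp
  have L1': "labs id (map Suc u) = map (\<lambda>(j, l). (Suc j, Suc ` l)) (labs id u)" using L1 by simp
  have L2: "labs g (Aw (Suc m)) = map (\<lambda>j. (j, {1, Suc (f j)})) (Aw (Suc m))"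
    unfolding labs_Aw g1 by (rule map_cong) (auto simp: set_Aw gS)
  show "labs id (map Suc u @ Aw (Suc m) @ v) =
     map (\<lambda>(j, l). (Suc j, Suc ` l)) (labs id u) @ map (\<lambda>j. (j, {1, Suc (f j)})) (Aw (Suc m))
       @ map (\<lambda>(j, l). (j, Suc ` l)) (labs f v)"
    unfolding labs_append st_append g_def[symmetric] h_def[symmetric] L1' L2 L3 by simp
  show "f ` {1..Suc m} = {1..Suc m}" using st_image[OF su(1), of id] assms(2) by simp
  show "inj f" using st_inj[of id] assms(2) by simp
qed


lemma snd_case: "snd ((\<lambda>(j, l). (g j, h l)) p) = h (snd p)"
  by (cases p) auto

lemma fst_case: "fst ((\<lambda>(j, l). (g j, h l)) p) = g (fst p)"
  by (cases p) auto

lemma distinct_3: "distinct (X @ Z) \<Longrightarrow> distinct Y \<Longrightarrow> (\<forall>l\<in>set Y. P l) \<Longrightarrow> (\<forall>l\<in>set X \<union> set Z. \<not> P l)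
  \<Longrightarrow> distinct (X @ Y @ Z)"
  by (simp add: disjoint_iff) blast

lemma Inv_ext_D:
  assumes "Inv m x" "s \<le> length x"
  shows "Inv (Suc m) (ext D (Suc m) s x)"
proof -
  define u where "u = take (length x - s) x"
  define v where "v = drop (length x - s) x"
  define f where "f = st id u"
  have x: "x = u @ v" unfolding u_def v_def by simp
  have sx: "set (u @ v) \<subseteq> {1..m}" using assms(1) x unfolding Inv_def by simp
  note S = struct_D[OF sx f_def]
  have z: "ext D (Suc m) s x = u @ Dw (Suc m) @ map Suc v"
    unfolding u_def v_def using ext_D_eq[OF assms(2)] .
  have LSx: "LS x = map snd (labs id u) @ map snd (labs f v)"
    unfolding LS_def x labs_append f_def by simp
  have LSz: "LS (ext D (Suc m) s x) = map snd (labs id u) @ map (\<lambda>j. {f j, Suc (Suc m)}) (Dw (Suc m)) @ map snd (labs f v)"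
    unfolding LS_def z S(1) by (simp add: comp_def snd_case)
  have d1: "distinct (map snd (labs id u) @ map snd (labs f v))" and
       b1: "\<forall>l\<in>set (map snd (labs id u) @ map snd (labs f v)). l \<subseteq> {1..Suc m}"
    using assms(1) LSx unfolding Inv_def by auto
  have fr: "f j \<in> {1..Suc m}" if "j \<in> {1..Suc m}" for j using S(2) that by blast
  have d2: "distinct (map (\<lambda>j. {f j, Suc (Suc m)}) (Dw (Suc m)))"
  proof (subst distinct_map, intro conjI distinct_Dw inj_onI)
    fix j k assume jk: "j \<in> set (Dw (Suc m))" "k \<in> set (Dw (Suc m))" "{f j, Suc (Suc m)} = {f k, Suc (Suc m)}"
    then have "f j \<in> {1..Suc m}" "f k \<in> {1..Suc m}" using fr by (auto simp: set_Dw)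
    then have "f j = f k" using jk(3) by (auto simp: doubleton_eq_iff)
    then show "j = k" using S(3) by (auto dest: injD)
  qed
  have disj: "Suc (Suc m) \<notin> l" if "l \<in> set (map snd (labs id u) @ map snd (labs f v))" for l
    using b1 that by fastforce
  have dz: "distinct (LS (ext D (Suc m) s x))"
    unfolding LSz by (rule distinct_3[OF d1 d2, of "\<lambda>l. Suc (Suc m) \<in> l"]) (use disj in auto)
  have bz: "\<forall>l\<in>set (LS (ext D (Suc m) s x)). l \<subseteq> {1..Suc (Suc m)}"
  proof -
    have "{1..Suc m} \<subseteq> {1..Suc (Suc m)}" by auto
    then have X: "\<forall>l\<in>set (map snd (labs id u) @ map snd (labs f v)). l \<subseteq> {1..Suc (Suc m)}"
      using b1 by blast
    have Y: "\<forall>l\<in>set (map (\<lambda>j. {f j, Suc (Suc m)}) (Dw (Suc m))). l \<subseteq> {1..Suc (Suc m)}"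
    proof
      fix l assume "l \<in> set (map (\<lambda>j. {f j, Suc (Suc m)}) (Dw (Suc m)))"
      then obtain j where "j \<in> {1..Suc m}" "l = {f j, Suc (Suc m)}" by (auto simp: set_Dw)
      then show "l \<subseteq> {1..Suc (Suc m)}" using fr[of j] by auto
    qed
    show ?thesis unfolding LSz using X Y by auto
  qed
  have setz: "set (ext D (Suc m) s x) \<subseteq> {1..Suc m}" unfolding z using sx by (auto simp: set_Dw)
  have "length (ext D (Suc m) s x) = length x + Suc m" unfolding z using assms(2)
    by (simp add: u_def v_def length_Dw)
  also have "\<dots> = Suc m * (Suc m + 1) div 2" using assms(1) unfolding Inv_def by simp
  finally show ?thesis unfolding Inv_def using dz bz setz by simp
qed

lemma Inv_ext_A:
  assumes "Inv m x" "s \<le> length x"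
  shows "Inv (Suc m) (ext A (Suc m) s x)"
proof -
  define u where "u = take (length x - s) x"
  define v where "v = drop (length x - s) x"
  define f where "f = st id u"
  have x: "x = u @ v" unfolding u_def v_def by simp
  have sx: "set (u @ v) \<subseteq> {1..m}" using assms(1) x unfolding Inv_def by simp
  note S = struct_A[OF sx f_def]
  have z: "ext A (Suc m) s x = map Suc u @ Aw (Suc m) @ v"
    unfolding u_def v_def using ext_A_eq[OF assms(2)] .
  have LSx: "LS x = map snd (labs id u) @ map snd (labs f v)"
    unfolding LS_def x labs_append f_def by simp
  have LSz: "LS (ext A (Suc m) s x) = map (image Suc) (map snd (labs id u)) @ map (\<lambda>j. {1, Suc (f j)}) (Aw (Suc m))
       @ map (image Suc) (map snd (labs f v))"
      unfolding LS_def z S(1) by (simp add: comp_def snd_case)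
  have d1: "distinct (map snd (labs id u) @ map snd (labs f v))" and
       b1: "\<forall>l\<in>set (map snd (labs id u) @ map snd (labs f v)). l \<subseteq> {1..Suc m}"
    using assms(1) LSx unfolding Inv_def by auto
  have fr: "f j \<in> {1..Suc m}" if "j \<in> {1..Suc m}" for j using S(2) that by blast
  have d2: "distinct (map (\<lambda>j. {1, Suc (f j)}) (Aw (Suc m)))"
  proof (subst distinct_map, intro conjI distinct_Aw inj_onI)
    fix j k assume jk: "j \<in> set (Aw (Suc m))" "k \<in> set (Aw (Suc m))" "{1, Suc (f j)} = {1, Suc (f k)}"
    then have "f j \<in> {1..Suc m}" "f k \<in> {1..Suc m}" using fr by (auto simp: set_Aw)
    then have "f j = f k" using jk(3) by (auto simp: doubleton_eq_iff)
    then show "j = k" using S(3) by (auto dest: injD)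
  qed
  have d1': "distinct (map (image Suc) (map snd (labs id u) @ map snd (labs f v)))"
    using d1 by (subst distinct_map) (auto intro: inj_onI simp: inj_image_eq_iff)
  have disj: "1 \<notin> Suc ` l" if "l \<in> set (map snd (labs id u) @ map snd (labs f v))" for l
    using b1 that by fastforce
  have dz: "distinct (LS (ext A (Suc m) s x))"
    unfolding LSz by (rule distinct_3[OF _ d2, of _ _ "\<lambda>l. 1 \<in> l"]) (use d1' disj in auto)
  have bz: "\<forall>l\<in>set (LS (ext A (Suc m) s x)). l \<subseteq> {1..Suc (Suc m)}"
  proof -
    have X: "\<forall>l\<in>set (map snd (labs id u) @ map snd (labs f v)). Suc ` l \<subseteq> {1..Suc (Suc m)}"
      using b1 by fastforce
    have Y: "\<forall>l\<in>set (map (\<lambda>j. {1, Suc (f j)}) (Aw (Suc m))). l \<subseteq> {1..Suc (Suc m)}"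
    proof
      fix l assume "l \<in> set (map (\<lambda>j. {1, Suc (f j)}) (Aw (Suc m)))"
      then obtain j where "j \<in> {1..Suc m}" "l = {1, Suc (f j)}" by (auto simp: set_Aw)
      then show "l \<subseteq> {1..Suc (Suc m)}" using fr[of j] by auto
    qed
    show ?thesis unfolding LSz using X Y by auto
  qed
  have setz: "set (ext A (Suc m) s x) \<subseteq> {1..Suc m}" unfolding z using sx by (auto simp: set_Aw)
  have "length (ext A (Suc m) s x) = length x + Suc m" unfolding z using assms(2)
    by (simp add: u_def v_def length_Aw)
  also have "\<dots> = Suc m * (Suc m + 1) div 2" using assms(1) unfolding Inv_def by simp
  finally show ?thesis unfolding Inv_def using dz bz setz by simp
qed

lemma Inv_ext: "Inv m x \<Longrightarrow> s \<le> length x \<Longrightarrow> Inv (Suc m) (ext d (Suc m) s x)"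
  by (cases d) (auto intro: Inv_ext_A Inv_ext_D)

lemma Inv_iword:
  "k \<le> length Is \<Longrightarrow> \<forall>i\<in>{1..length Is}. Is ! (i - 1) \<le> i * (i - 1) div 2 \<Longrightarrow> Inv k (iword k ds Is)"
proof (induction k)
  case 0 then show ?case by (simp add: Inv_def LS_def)
next
  case (Suc k)
  have I: "Inv k (iword k ds Is)" using Suc by simp
  have "Is ! k \<le> Suc k * k div 2" using Suc.prems(2)[rule_format, of "Suc k"] Suc.prems(1) by simp
  also have "\<dots> = length (iword k ds Is)" using I unfolding Inv_def by (simp add: mult.commute)
  finally show ?case using Inv_ext[OF I] by simp
qed


lemma idx_unique:
  assumes "xs = X @ [l] @ Y" "xs = X' @ [l'] @ Y'" "P l'" "\<forall>y\<in>set X \<union> set Y. \<not> P y"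
  shows "length X' = length X"
proof (rule ccontr)
  assume ne: "length X' \<noteq> length X"
  have e: "xs ! length X' = l'" using assms(2) by simp
  show False
  proof (cases "length X' < length X")
    case True
    then have "xs ! length X' = X ! length X'" using assms(1) by (simp add: nth_append)
    then have "l' \<in> set X" using e True by (metis nth_mem)
    then show ?thesis using assms(3,4) by blast
  next
    case False
    then have gt: "length X' > length X" using ne by simp
    have lt: "length X' < length xs" using assms(2) by simp
    have "xs ! length X' = Y ! (length X' - length X - 1)"
      using assms(1) gt by (simp add: nth_append)
    moreover have "length X' - length X - 1 < length Y" using lt gt assms(1) by simp
    ultimately have "l' \<in> set Y" using e by (metis nth_mem)
    then show ?thesis using assms(3,4) by blast
  qed
qed

lemma cnt_filter_fst: "length (filter (\<lambda>p. fst p = j) X) = cnt j (map fst X)"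
  unfolding cnt_def by (induction X) auto

lemma count_lemma:
  assumes "LL j z = LL j z'"
    and "labs id z = X @ Y @ Z" "map fst X = U" "filter (\<lambda>p. fst p = j) Y = [(j, l)]"
    and "labs id z' = X' @ Y' @ Z'" "map fst X' = U'" "filter (\<lambda>p. fst p = j) Y' = [(j, l')]"
    and "T \<in> l'" "\<forall>p\<in>set X \<union> set Z. T \<notin> snd p"
  shows "cnt j U' = cnt j U"
proof -
  define F where "F = (\<lambda>W::(nat \<times> nat set) list. map snd (filter (\<lambda>p. fst p = j) W))"
  have 1: "LL j z = F X @ [l] @ F Z" unfolding LL_def F_def assms(2) using assms(4) by simp
  have "LL j z' = F X' @ [l'] @ F Z'" unfolding LL_def F_def assms(5) using assms(7) by simp
  then have 2: "LL j z = F X' @ [l'] @ F Z'" using assms(1) by simp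
  have 3: "\<forall>y\<in>set (F X) \<union> set (F Z). T \<notin> y" using assms(9) unfolding F_def by auto
  have "length (F X') = length (F X)" by (rule idx_unique[OF 1 2, of "\<lambda>y. T \<in> y"]) (use assms(8) 3 in auto)
  then show ?thesis unfolding F_def using cnt_filter_fst[of j X] cnt_filter_fst[of j X'] assms(3,6) by simp
qed

lemma filter_single: "distinct xs \<Longrightarrow> j \<in> set xs \<Longrightarrow> filter (\<lambda>k. k = j) xs = [j]"
  by (induction xs) (auto simp: filter_empty_conv)

lemma filter_map_single:
  "distinct xs \<Longrightarrow> j \<in> set xs \<Longrightarrow> filter (\<lambda>p. fst p = j) (map (\<lambda>k. (k, F k)) xs) = [(j, F j)]"
  using filter_single[of xs j] by (simp add: filter_map comp_def)

lemma cnt_notin: "j \<notin> set w \<Longrightarrow> cnt j w = 0"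
  unfolding cnt_def by (induction w) auto

lemma distinct_dup: "distinct (X @ [e] @ Y) \<Longrightarrow> e \<in> set Y \<Longrightarrow> False"
  by auto


lemma key_D:
  assumes I: "Inv m x" and s: "s \<le> length x"
    and zz: "(ext D (Suc m) s x) \<sim>\<^sub>2 (u' @ Dw (Suc m) @ v')"
  shows "length v' = s \<and> (u' @ map (\<lambda>x. x - 1) v') \<sim>\<^sub>2 x"
proof -
  define n where "n = Suc m"
  define u where "u = take (length x - s) x"
  define v where "v = drop (length x - s) x"
  define f where "f = st id u"
  have x: "x = u @ v" unfolding u_def v_def by simp
  have sx: "set (u @ v) \<subseteq> {1..m}" using I x unfolding Inv_def by simp
  note S = struct_D[OF sx f_def]
  have z: "ext D (Suc m) s x = u @ Dw n @ map Suc v"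
    unfolding u_def v_def n_def using ext_D_eq[OF s] .
  define z where "z = u @ Dw n @ map Suc v"
  define z' where "z' = u' @ Dw n @ v'"
  have zz': "z \<sim>\<^sub>2 z'" using zz z unfolding z_def z'_def n_def by simp
  have Iz: "Inv n z" using Inv_ext_D[OF I s] z unfolding z_def n_def by simp
  have setz': "set z' \<subseteq> {1..n}" using Iz commeq_set[OF zz'] unfolding Inv_def by simp
  have dz': "distinct (LS z')" using Iz commeq_LS_distinct[OF zz'] unfolding Inv_def by simp
  have LSx: "LS x = map snd (labs id u) @ map snd (labs f v)"
    unfolding LS_def x labs_append f_def by simp
  have b1: "\<forall>l\<in>set (map snd (labs id u) @ map snd (labs f v)). l \<subseteq> {1..n}"
    using I LSx unfolding Inv_def n_def by auto
  have nU: "n \<notin> set u'"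
  proof
    assume "n \<in> set u'"
    then obtain a b where ab: "u' = a @ n # b" and nb: "n \<notin> set b" by (meson split_list_last)
    have "set b \<subseteq> {1..Suc m}" using setz' unfolding z'_def ab n_def by auto
    then have sb: "set b \<subseteq> {1..m}" using nb unfolding n_def by (auto simp: subset_iff le_Suc_eq)
    define ft where "ft = st id a"
    define h where "h = ft \<circ> sref n"
    define f' where "f' = st h b"
    have stu: "st id u' = f'" unfolding ab f'_def h_def ft_def by (simp add: st_append)
    have W: "f' (Suc n) = ft n" using st_outside[OF sb, of "Suc n" h] unfolding f'_def h_def n_def
      by (simp add: sref_def)
    have "h n \<in> h ` {1..Suc m}" unfolding n_def by simp
    then have "h n \<in> f' ` {1..Suc m}" unfolding f'_def using st_image[OF sb, of h] by simp
    then obtain i where i: "i \<in> {1..n}" "f' i = ft (Suc n)" unfolding n_def h_def by (auto simp: sref_def)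
    have "LS z' = map snd (labs id a) @ [{ft n, ft (Suc n)}] @
       (map snd (labs h b) @ map (\<lambda>j. {f' j, f' (Suc n)}) (Dw n) @ map snd (labs (st f' (Dw n)) v'))"
      unfolding LS_def z'_def ab labs_append st_append stu[unfolded ab st_append]
      by (simp add: labs_Dw ft_def h_def comp_def)
    moreover have "{ft n, ft (Suc n)} \<in> set (map (\<lambda>j. {f' j, f' (Suc n)}) (Dw n))"
      using i W by (auto simp: set_Dw image_iff intro!: bexI[of _ i])
    ultimately show False using dz' distinct_dup by fastforce
  qed
  have "set u' \<subseteq> {1..Suc m}" using setz' unfolding z'_def n_def by auto
  then have su': "set u' \<subseteq> {1..m}" using nU unfolding n_def by (auto simp: subset_iff le_Suc_eq)
  define f' where "f' = st id u'"
  have f'T: "f' (Suc n) = Suc n" using st_outside[OF su', of "Suc n" id] unfolding f'_def n_def by simp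
  have cnts: "\<forall>j. cnt j u = cnt j u'"
  proof
    fix j
    show "cnt j u = cnt j u'"
    proof (cases "j \<in> {1..n}")
      case False
      have "j \<notin> set u" using sx False unfolding n_def by auto
      moreover have "j \<notin> set u'" using su' False unfolding n_def by auto
      ultimately show ?thesis by (simp add: cnt_notin)
    next
      case True
      have "cnt j u' = cnt j u"
      proof (rule count_lemma[where T = "Suc n"])
        show "LL j z = LL j z'" using commeq_LL[OF zz'] .
        show "labs id z = labs id u @ map (\<lambda>k. (k, {f k, Suc n})) (Dw n) @ map (\<lambda>(j, l). (Suc j, l)) (labs f v)"
          unfolding z_def n_def using S(1) .
        show "map fst (labs id u) = u" by (rule map_fst_labs)
        show "filter (\<lambda>p. fst p = j) (map (\<lambda>k. (k, {f k, Suc n})) (Dw n)) = [(j, {f j, Suc n})]"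
          using True by (intro filter_map_single) (auto simp: distinct_Dw set_Dw)
        show "labs id z' = labs id u' @ map (\<lambda>k. (k, {f' k, Suc n})) (Dw n) @ labs (st f' (Dw n)) v'"
          unfolding z'_def labs_append f'_def[symmetric] labs_Dw f'T by simp
        show "map fst (labs id u') = u'" by (rule map_fst_labs)
        show "filter (\<lambda>p. fst p = j) (map (\<lambda>k. (k, {f' k, Suc n})) (Dw n)) = [(j, {f' j, Suc n})]"
          using True by (intro filter_map_single) (auto simp: distinct_Dw set_Dw)
        show "Suc n \<in> {f' j, Suc n}" by simp
        show "\<forall>p\<in>set (labs id u) \<union> set (map (\<lambda>(j, l). (Suc j, l)) (labs f v)). Suc n \<notin> snd p"
        proof
          fix p assume p: "p \<in> set (labs id u) \<union> set (map (\<lambda>(j, l). (Suc j, l)) (labs f v))"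
          have "snd p \<in> set (map snd (labs id u) @ map snd (labs f v))"
          proof (cases "p \<in> set (labs id u)")
            case True then show ?thesis by simp
          next
            case False
            then obtain q where q: "q \<in> set (labs f v)" "p = (\<lambda>(j, l). (Suc j, l)) q" using p by auto
            then have "snd p = snd q" by (simp add: snd_case)
            moreover have "snd q \<in> set (map snd (labs f v))" using q(1) by simp
            ultimately show ?thesis by simp
          qed
          then have "snd p \<subseteq> {1..n}" using b1 by blast
          then show "Suc n \<notin> snd p" by auto
        qed
      qed
      then show ?thesis by simp
    qed
  qed
  have zz'': "(u @ Dw n @ map Suc v) \<sim>\<^sub>2 (u' @ Dw n @ v')" using zz' unfolding z_def z'_def .
  note SB = split_by_counts[OF zz'' cnts]
  have lv: "length v' = s"
    using commeq_length[OF SB(2)] s unfolding v_def by simp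
  have pos: "\<forall>y\<in>set v'. 0 < y" using setz' unfolding z'_def by auto
  have "map (\<lambda>x. x - 1) v' \<sim>\<^sub>2 map (\<lambda>x. x - 1) (map Suc v)"
    using commeq_map_pred[OF commeq_sym[OF SB(2)] pos] .
  then have vv: "map (\<lambda>x. x - 1) v' \<sim>\<^sub>2 v" by (simp add: comp_def)
  have "(u' @ map (\<lambda>x. x - 1) v') \<sim>\<^sub>2 (u @ v)"
    using commeq_app[OF commeq_sym[OF SB(1)] vv] .
  then show ?thesis using lv x by simp
qed


lemma map_fst_case: "map fst (map (\<lambda>(j, l). (g j, h l)) xs) = map g (map fst xs)"
  by (induction xs) auto

lemma sub2: "set b \<subseteq> {1..n} \<Longrightarrow> 1 \<notin> set b \<Longrightarrow> set b \<subseteq> {2..(n::nat)}"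
proof
  fix t assume "set b \<subseteq> {1..n}" "1 \<notin> set b" "t \<in> set b"
  then have "1 \<le> t" "t \<le> n" "t \<noteq> 1" by auto
  then show "t \<in> {2..n}" by simp
qed

lemma key_A:
  assumes I: "Inv m x" and s: "s \<le> length x"
    and zz: "(ext A (Suc m) s x) \<sim>\<^sub>2 (u' @ Aw (Suc m) @ v')"
  shows "length v' = s \<and> (map (\<lambda>x. x - 1) u' @ v') \<sim>\<^sub>2 x"
proof -
  define n where "n = Suc m"
  define u where "u = take (length x - s) x"
  define v where "v = drop (length x - s) x"
  define f where "f = st id u"
  have x: "x = u @ v" unfolding u_def v_def by simp
  have sx: "set (u @ v) \<subseteq> {1..m}" using I x unfolding Inv_def by simp
  note S = struct_A[OF sx f_def]
  have z: "ext A (Suc m) s x = map Suc u @ Aw n @ v"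
    unfolding u_def v_def n_def using ext_A_eq[OF s] .
  define z where "z = map Suc u @ Aw n @ v"
  define z' where "z' = u' @ Aw n @ v'"
  have zz': "z \<sim>\<^sub>2 z'" using zz z unfolding z_def z'_def n_def by simp
  have Iz: "Inv n z" using Inv_ext_A[OF I s] z unfolding z_def n_def by simp
  have setz': "set z' \<subseteq> {1..n}" using Iz commeq_set[OF zz'] unfolding Inv_def by simp
  have dz': "distinct (LS z')" using Iz commeq_LS_distinct[OF zz'] unfolding Inv_def by simp
  have LSx: "LS x = map snd (labs id u) @ map snd (labs f v)"
    unfolding LS_def x labs_append f_def by simp
  have b1: "\<forall>l\<in>set (map snd (labs id u) @ map snd (labs f v)). l \<subseteq> {1..n}"
    using I LSx unfolding Inv_def n_def by auto
  have nU: "1 \<notin> set u'"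
  proof
    assume "1 \<in> set u'"
    then obtain a b where ab: "u' = a @ 1 # b" and nb: "1 \<notin> set b" by (meson split_list_last)
    have "set b \<subseteq> {1..n}" using setz' unfolding z'_def ab by auto
    then have sb: "set b \<subseteq> {2..n}" using nb by (rule sub2)
    define ft where "ft = st id a"
    define h where "h = ft \<circ> sref 1"
    define f' where "f' = st h b"
    have stu: "st id u' = f'" unfolding ab f'_def h_def ft_def by (simp add: st_append)
    have W: "f' 1 = ft 2" using st_outside[OF sb, of 1 h] unfolding f'_def h_def
      by (simp add: sref_def numeral_2_eq_2)
    have "h 2 \<in> h ` {2..Suc n}" unfolding n_def by simp
    then have "h 2 \<in> f' ` {2..Suc n}" unfolding f'_def using st_image[OF sb, of h] by simp
    then obtain i where i: "i \<in> {2..Suc n}" "f' i = ft 1" unfolding h_def by (auto simp: sref_def)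
    then obtain j where j: "j \<in> {1..n}" "i = Suc j" by (cases i) auto
    have "LS z' = map snd (labs id a) @ [{ft 1, ft (Suc 1)}] @
       (map snd (labs h b) @ map (\<lambda>j. {f' 1, f' (Suc j)}) (Aw n) @ map snd (labs (st f' (Aw n)) v'))"
      unfolding LS_def z'_def ab labs_append st_append stu[unfolded ab st_append]
      by (simp add: labs_Aw ft_def h_def comp_def)
    moreover have "{ft 1, ft (Suc 1)} \<in> set (map (\<lambda>j. {f' 1, f' (Suc j)}) (Aw n))"
      using i j W by (auto simp: set_Aw image_iff insert_commute numeral_2_eq_2 intro!: bexI[of _ j])
    ultimately show False using dz' distinct_dup by fastforce
  qed
  have "set u' \<subseteq> {1..n}" using setz' unfolding z'_def by auto
  then have su': "set u' \<subseteq> {2..n}" using nU by (rule sub2)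
  define f' where "f' = st id u'"
  have f'T: "f' 1 = 1" using st_outside[OF su', of 1 id] unfolding f'_def by simp
  have sMu: "set (map Suc u) \<subseteq> {2..n}" using sx unfolding n_def by auto
  have cnts: "\<forall>j. cnt j (map Suc u) = cnt j u'"
  proof
    fix j
    show "cnt j (map Suc u) = cnt j u'"
    proof (cases "j \<in> {1..n}")
      case False
      have "j \<notin> set (map Suc u)" using sMu False by auto
      moreover have "j \<notin> set u'" using su' False by auto
      ultimately show ?thesis by (simp add: cnt_notin)
    next
      case True
      have "cnt j u' = cnt j (map Suc u)"
      proof (rule count_lemma[where T = "1"])
        show "LL j z = LL j z'" using commeq_LL[OF zz'] .
        show "labs id z = map (\<lambda>(j, l). (Suc j, Suc ` l)) (labs id u) @ map (\<lambda>k. (k, {1, Suc (f k)})) (Aw n)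
           @ map (\<lambda>(j, l). (j, Suc ` l)) (labs f v)"
          unfolding z_def n_def using S(1) .
        show "map fst (map (\<lambda>(j, l). (Suc j, Suc ` l)) (labs id u)) = map Suc u"
          by (simp only: map_fst_case map_fst_labs)
        show "filter (\<lambda>p. fst p = j) (map (\<lambda>k. (k, {1, Suc (f k)})) (Aw n)) = [(j, {1, Suc (f j)})]"
          using True by (intro filter_map_single) (auto simp: distinct_Aw set_Aw)
        show "labs id z' = labs id u' @ map (\<lambda>k. (k, {1, f' (Suc k)})) (Aw n) @ labs (st f' (Aw n)) v'"
          unfolding z'_def labs_append f'_def[symmetric] labs_Aw f'T by simp
        show "map fst (labs id u') = u'" by (rule map_fst_labs)
        show "filter (\<lambda>p. fst p = j) (map (\<lambda>k. (k, {1, f' (Suc k)})) (Aw n)) = [(j, {1, f' (Suc j)})]"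
          using True by (intro filter_map_single) (auto simp: distinct_Aw set_Aw)
        show "1 \<in> {1, f' (Suc j)}" by simp
        show "\<forall>p\<in>set (map (\<lambda>(j, l). (Suc j, Suc ` l)) (labs id u)) \<union> set (map (\<lambda>(j, l). (j, Suc ` l)) (labs f v)). 1 \<notin> snd p"
        proof
          fix p assume p: "p \<in> set (map (\<lambda>(j, l). (Suc j, Suc ` l)) (labs id u)) \<union> set (map (\<lambda>(j, l). (j, Suc ` l)) (labs f v))"
          then obtain q where q: "q \<in> set (labs id u) \<union> set (labs f v)" "snd p = Suc ` snd q"
            by (auto simp: snd_case) blast+
          have "snd q \<in> set (map snd (labs id u) @ map snd (labs f v))" using q(1) by auto
          then have "snd q \<subseteq> {1..n}" using b1 by blast
          then show "1 \<notin> snd p" using q(2) by auto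
        qed
      qed
      then show ?thesis by simp
    qed
  qed
  have zz'': "(map Suc u @ Aw n @ v) \<sim>\<^sub>2 (u' @ Aw n @ v')" using zz' unfolding z_def z'_def .
  note SB = split_by_counts[OF zz'' cnts]
  have lv: "length v' = s"
    using commeq_length[OF SB(2)] s unfolding v_def by simp
  have pos: "\<forall>y\<in>set u'. 0 < y" using su' by auto
  have "map (\<lambda>x. x - 1) u' \<sim>\<^sub>2 map (\<lambda>x. x - 1) (map Suc u)"
    using commeq_map_pred[OF commeq_sym[OF SB(1)] pos] .
  then have uu: "map (\<lambda>x. x - 1) u' \<sim>\<^sub>2 u" by (simp add: comp_def)
  have "(map (\<lambda>x. x - 1) u' @ v') \<sim>\<^sub>2 (u @ v)"
    using commeq_app[OF uu commeq_sym[OF SB(2)]] .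
  then show ?thesis using lv x by simp
qed


lemma decomp_mem:
  assumes "w \<sim>\<^sub>2 (u @ dword d n @ v)"
  shows "decomp d n w \<in> min_decomps (dword d n) w"
proof -
  define Q where "Q = (\<lambda>p. w \<sim>\<^sub>2 (fst p @ dword d n @ snd p))"
  define mm where "mm = (\<lambda>p. move_dist w (fst p @ dword d n @ snd p))"
  have "Q (u, v)" unfolding Q_def using assms by simp
  from ex_has_least_nat[of Q "(u, v)" mm, OF this]
  obtain p where p: "Q p" "\<forall>y. Q y \<longrightarrow> mm p \<le> mm y" by blast
  have "p \<in> min_decomps (dword d n) w"
    using p unfolding min_decomps_def Q_def mm_def by (cases p) auto
  then show ?thesis unfolding decomp_def by (rule someI)
qed

lemma commeq_trans: "a \<sim>\<^sub>2 b \<Longrightarrow> b \<sim>\<^sub>2 c \<Longrightarrow> a \<sim>\<^sub>2 c"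
  by (rule rtranclp_trans)

lemma ind_contr:
  assumes I: "Inv m x" and s: "s \<le> length x" and w: "w \<sim>\<^sub>2 ext d (Suc m) s x"
  shows "ind d (Suc m) w = s \<and> contr d (Suc m) w \<sim>\<^sub>2 x"
proof -
  have ex: "\<exists>u v. ext d (Suc m) s x = u @ dword d (Suc m) @ v"
    using ext_D_eq[OF s] ext_A_eq[OF s] by (cases d) (auto simp: dword_def)
  then obtain u v where "ext d (Suc m) s x = u @ dword d (Suc m) @ v" by blast
  then have "decomp d (Suc m) w \<in> min_decomps (dword d (Suc m)) w"
    using w by (intro decomp_mem) simp
  moreover obtain u' v' where uv: "decomp d (Suc m) w = (u', v')" by fastforce
  ultimately have "w \<sim>\<^sub>2 (u' @ dword d (Suc m) @ v')" unfolding min_decomps_def by simp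
  then have zz: "ext d (Suc m) s x \<sim>\<^sub>2 (u' @ dword d (Suc m) @ v')"
    using commeq_trans[OF commeq_sym[OF w]] by blast
  show ?thesis
  proof (cases d)
    case A
    then show ?thesis using key_A[OF I s] zz uv unfolding ind_def contr_def dword_def by simp
  next
    case D
    then show ?thesis using key_D[OF I s] zz uv unfolding ind_def contr_def dword_def by simp
  qed
qed

lemma main:
  assumes "\<forall>i\<in>{1..length Is}. Is ! (i - 1) \<le> i * (i - 1) div 2"
  shows "k \<le> length Is \<Longrightarrow> w \<sim>\<^sub>2 iword k ds Is \<Longrightarrow> ind_delta k ds w = take k Is"
proof (induction k arbitrary: w)
  case 0 then show ?case by simp
next
  case (Suc k)
  have I: "Inv k (iword k ds Is)" using Inv_iword[of k Is ds] Suc.prems(1) assms by simp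
  have "Is ! k \<le> Suc k * k div 2" using assms[rule_format, of "Suc k"] Suc.prems(1) by simp
  also have "\<dots> = length (iword k ds Is)" using I unfolding Inv_def by (simp add: mult.commute)
  finally have s: "Is ! k \<le> length (iword k ds Is)" .
  have w: "w \<sim>\<^sub>2 ext (ds ! k) (Suc k) (Is ! k) (iword k ds Is)" using Suc.prems(2) by simp
  note R = ind_contr[OF I s w]
  have "ind_delta k ds (contr (ds ! k) (Suc k) w) = take k Is"
    using Suc.IH[of "contr (ds ! k) (Suc k) w"] R Suc.prems(1) by simp
  then show ?case using R Suc.prems(1) by (simp add: take_Suc_conv_app_nth)
qed

theorem lemma4p10:
  fixes n :: nat and ds :: "dir list" and Is :: "nat list" and w :: "nat list"
  assumes "length ds = n" and "length Is = n"
    and "\<forall>i\<in>{1..n}. Is ! (i - 1) \<le> i * (i - 1) div 2"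
    and "w \<in> redw0 n"
    and "w \<sim>\<^sub>2 iword n ds Is"
  shows "ind_delta n ds w = Is"
  using main[of Is n w ds] assms by simp

end
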